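(* Let $(P,\lambda)$ be a marked poset which is strict and irredundant. For every $p\in P\setminus P^*$, the equation $x_p=0$ defines a facet of the marked chain polytope $\mathcal{C}(P,\lambda)$. Moreover, $0$ is a vertex of $\mathcal{C}(P,\lambda)$.
   Context: A marked poset $(P,\lambda)$ is a finite poset $(P,\preceq)$ together with an induced subposet $P^*\subseteq P$ of marked elements and an order-preserving marking $\lambda:P^*\to\mathbb{R}$; it is always assumed that all minimal and all maximal elements of $P$ lie in $P^*$. It is strict if $\lambda(a)<\lambda(b)$ whenever $a\prec b$ in $P^*$, and irredundant (regular) if for every covering relation $p\prec q$ in $P$ and all $a,b\in P^*$ with $a\preceq q$ and $p\preceq b$, one has $a=b$ or $\lambda(a)<\lambda(b)$. The marked chain polytope $\mathcal{C}(P,\lambda)$ is the set of all $x\in\mathbb{R}_{\ge0}^{P\setminus P^*}$ with $x_{p_1}+\dots+x_{p_k}\le\lambda(b)-\lambda(a)$ for every maximal chain $a\prec p_1\prec\cdots\prec p_k\prec b$ in $P$ with $a,b\in P^*$ and $p_1,\dots,p_k\in P\setminus P^*$. *)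

theory Defs
  imports "HOL-Analysis.Analysis"
begin

text \<open>The finite poset P is the (finite) type 'a with its order; the marked
elements form the set Pstar, the marking is lam (only its values on Pstar matter).\<close>

definition covers :: "'a::order \<Rightarrow> 'a \<Rightarrow> bool" where
  "covers p q \<longleftrightarrow> p < q \<and> \<not> (\<exists>z. p < z \<and> z < q)"

definition marked_poset :: "'a::{finite,order} set \<Rightarrow> ('a \<Rightarrow> real) \<Rightarrow> bool" where
  "marked_poset Pstar lam \<longleftrightarrow>
     (\<forall>p. (\<forall>q. \<not> q < p) \<longrightarrow> p \<in> Pstar) \<and>
     (\<forall>p. (\<forall>q. \<not> p < q) \<longrightarrow> p \<in> Pstar) \<and>
     (\<forall>a\<in>Pstar. \<forall>b\<in>Pstar. a \<le> b \<longrightarrow> lam a \<le> lam b)"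

definition strict_marked :: "'a::{finite,order} set \<Rightarrow> ('a \<Rightarrow> real) \<Rightarrow> bool" where
  "strict_marked Pstar lam \<longleftrightarrow> (\<forall>a\<in>Pstar. \<forall>b\<in>Pstar. a < b \<longrightarrow> lam a < lam b)"

definition irredundant_marked :: "'a::{finite,order} set \<Rightarrow> ('a \<Rightarrow> real) \<Rightarrow> bool" where
  "irredundant_marked Pstar lam \<longleftrightarrow>
     (\<forall>p q. covers p q \<longrightarrow>
        (\<forall>a\<in>Pstar. \<forall>b\<in>Pstar. a \<le> q \<longrightarrow> p \<le> b \<longrightarrow> a = b \<or> lam a < lam b))"

definition marked_max_chain :: "'a::{finite,order} set \<Rightarrow> 'a \<Rightarrow> 'a list \<Rightarrow> 'a \<Rightarrow> bool" where
  "marked_max_chain Pstar a ps b \<longleftrightarrow>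
     a \<in> Pstar \<and> b \<in> Pstar \<and> (\<forall>p\<in>set ps. p \<notin> Pstar) \<and>
     successively covers (a # ps @ [b])"

text \<open>The marked chain polytope, a subset of R^(P - Pstar), embedded into R^P = real^'a
by fixing all marked coordinates to be 0.\<close>
definition marked_chain_polytope :: "'a::{finite,order} set \<Rightarrow> ('a \<Rightarrow> real) \<Rightarrow> (real^('a::{finite,order})) set" where
  "marked_chain_polytope Pstar lam =
     {x. (\<forall>q\<in>Pstar. x $ q = 0) \<and> (\<forall>q. q \<notin> Pstar \<longrightarrow> 0 \<le> x $ q) \<and>
         (\<forall>a ps b. marked_max_chain Pstar a ps b \<longrightarrow>
             sum_list (map (\<lambda>p. x $ p) ps) \<le> lam b - lam a)}"

end

theory Submission
  imports Defs
begin

lemma aff_dim_coord: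
  fixes T :: "(real^'a::finite) set"
  assumes "0 \<in> T" "\<And>x q. x \<in> T \<Longrightarrow> q \<notin> U \<Longrightarrow> x $ q = 0"
    and "\<And>q. q \<in> U \<Longrightarrow> \<exists>c. c \<noteq> 0 \<and> c *\<^sub>R axis q 1 \<in> T"
  shows "aff_dim T = int (card U)"
proof -
  have "aff_dim T = int (dim ((+) (- 0) ` T))"
    by (rule aff_dim_eq_dim) (simp add: assms(1) hull_inc)
  hence ad: "aff_dim T = int (dim T)" by simp
  let ?W = "(\<lambda>q. axis q (1::real)) ` U"
  have inj: "inj_on (\<lambda>q. axis q (1::real)) U" by (auto simp: inj_on_def axis_eq_axis)
  have cW: "card ?W = card U" using card_image[OF inj] .
  have "T \<subseteq> span ?W"
  proof
    fix x assume x: "x \<in> T"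
    have "x = (\<Sum>q\<in>U. x $ q *\<^sub>R axis q 1)"
    proof (subst vec_eq_iff, intro allI)
      fix i
      have "(\<Sum>q\<in>U. x $ q *\<^sub>R axis q (1::real)) $ i = (\<Sum>q\<in>U. x $ q * (if i = q then 1 else 0))"
        by (simp add: axis_def)
      also have "\<dots> = (\<Sum>q\<in>U. if i = q then x $ q else 0)" by (rule sum.cong) auto
      also have "\<dots> = (if i \<in> U then x $ i else 0)" by (simp add: sum.delta sum.delta')
      also have "\<dots> = x $ i" using assms(2)[OF x] by auto
      finally show "x $ i = (\<Sum>q\<in>U. x $ q *\<^sub>R axis q 1) $ i" by simp
    qed
    also have "\<dots> \<in> span ?W"
      by (intro span_sum span_mul span_base) auto
    finally show "x \<in> span ?W" .
  qed
  hence le: "dim T \<le> card U" using dim_le_card[of T ?W] cW by simp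
  have "?W \<subseteq> span T"
  proof
    fix w assume "w \<in> ?W"
    then obtain q where q: "q \<in> U" "w = axis q 1" by auto
    obtain c where c: "c \<noteq> 0" "c *\<^sub>R axis q 1 \<in> T" using assms(3)[OF q(1)] by auto
    have "(1/c) *\<^sub>R (c *\<^sub>R axis q 1) \<in> span T" by (intro span_mul span_base c)
    thus "w \<in> span T" using c q by simp
  qed
  moreover have "independent ?W"
    by (rule independent_mono[OF independent_Basis]) auto
  ultimately have "card ?W \<le> dim (span T)" by (rule independent_card_le_dim)
  hence "card U \<le> dim T" using cW by simp
  with le ad show ?thesis by simp
qed

lemma sorted_lt_distinct: "sorted_wrt (<) (xs :: 'a::order list) \<Longrightarrow> distinct xs"
  by (induction xs) auto

lemma chain_props:
  fixes a b :: "'a::{finite,order}"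
  assumes "marked_max_chain Pstar a ps b"
  shows "a < b" "distinct ps"
proof -
  have "successively covers (a # ps @ [b])" using assms by (simp add: marked_max_chain_def)
  hence "successively (<) (a # ps @ [b])"
    by (rule successively_mono) (simp add: covers_def)
  hence s: "sorted_wrt (<) (a # ps @ [b])"
    by (subst (asm) successively_conv_sorted_wrt) auto
  thus "a < b" by simp
  from sorted_lt_distinct[OF s] show "distinct ps" by simp
qed

theorem lemma4p3:
  fixes Pstar :: "'a::{finite,order} set" and lam :: "'a \<Rightarrow> real"
  assumes "marked_poset Pstar lam"
    and "strict_marked Pstar lam"
    and "irredundant_marked Pstar lam"
  shows "(\<forall>p. p \<notin> Pstar \<longrightarrow>
            {x \<in> marked_chain_polytope Pstar lam. x $ p = 0} facet_of marked_chain_polytope Pstar lam)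
         \<and> 0 extreme_point_of marked_chain_polytope Pstar lam"
proof -
  define S where "S = marked_chain_polytope Pstar lam"
  have mono: "lam a \<le> lam b" if "a \<in> Pstar" "b \<in> Pstar" "a \<le> b" for a b
    using assms(1) that by (simp add: marked_poset_def)
  have strict: "lam a < lam b" if "a \<in> Pstar" "b \<in> Pstar" "a < b" for a b
    using assms(2) that by (simp add: strict_marked_def)
  have S0: "0 \<in> S"
    unfolding S_def marked_chain_polytope_def
  proof (intro CollectI conjI allI ballI impI)
    fix a ps b assume c: "marked_max_chain Pstar a ps b"
    have "lam a \<le> lam b" using chain_props(1)[OF c] c mono
      by (simp add: marked_max_chain_def)
    thus "sum_list (map (\<lambda>p. (0::real^'a::{finite,order}) $ p) ps) \<le> lam b - lam a" by simp
  qed auto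
  have nonneg: "0 \<le> x $ q" if "x \<in> S" for x q
    using that by (cases "q \<in> Pstar") (auto simp: S_def marked_chain_polytope_def)
  have convS: "convex S"
    unfolding convex_def
  proof (intro ballI allI impI)
    fix x y :: "real^'a::{finite,order}" and u v :: real
    assume x: "x \<in> S" and y: "y \<in> S" and uv: "0 \<le> u" "0 \<le> v" "u + v = 1"
    show "u *\<^sub>R x + v *\<^sub>R y \<in> S"
      unfolding S_def marked_chain_polytope_def
    proof (intro CollectI conjI allI ballI impI)
      fix q assume "q \<in> Pstar" thus "(u *\<^sub>R x + v *\<^sub>R y) $ q = 0"
        using x y by (simp add: S_def marked_chain_polytope_def)
    next
      fix q show "0 \<le> (u *\<^sub>R x + v *\<^sub>R y) $ q"
        using nonneg[OF x, of q] nonneg[OF y, of q] uv by simp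
    next
      fix a ps b assume c: "marked_max_chain Pstar a ps b"
      have hx: "sum_list (map (\<lambda>p. x $ p) ps) \<le> lam b - lam a"
        using x c by (simp add: S_def marked_chain_polytope_def)
      have hy: "sum_list (map (\<lambda>p. y $ p) ps) \<le> lam b - lam a"
        using y c by (simp add: S_def marked_chain_polytope_def)
      have "sum_list (map (\<lambda>p. (u *\<^sub>R x + v *\<^sub>R y) $ p) ps)
          = u * sum_list (map (\<lambda>p. x $ p) ps) + v * sum_list (map (\<lambda>p. y $ p) ps)"
        by (simp add: sum_list_addf sum_list_const_mult)
      also have "\<dots> \<le> u * (lam b - lam a) + v * (lam b - lam a)"
        by (intro add_mono mult_left_mono hx hy uv)
      also have "\<dots> = lam b - lam a" by (metis distrib_right uv(3) mult_1)
      finally show "sum_list (map (\<lambda>p. (u *\<^sub>R x + v *\<^sub>R y) $ p) ps) \<le> lam b - lam a" .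
    qed
  qed
  define E where "E = (\<lambda>(a,b). lam b - lam a) ` {(a,b). a \<in> Pstar \<and> b \<in> Pstar \<and> a < b}"
  define eps where "eps = Min (insert 1 E)"
  have finE: "finite E" unfolding E_def by simp
  have Epos: "e > 0" if "e \<in> E" for e
    using that strict by (auto simp: E_def)
  have eps_pos: "eps > 0" unfolding eps_def using finE Epos by (simp add: Min_gr_iff)
  have eps_le: "eps \<le> lam b - lam a" if "a \<in> Pstar" "b \<in> Pstar" "a < b" for a b
  proof -
    have "lam b - lam a \<in> insert 1 E" using that by (auto simp: E_def)
    thus ?thesis unfolding eps_def using finE by simp
  qed
  have axS: "eps *\<^sub>R axis q 1 \<in> S" if q: "q \<notin> Pstar" for q
    unfolding S_def marked_chain_polytope_def
  proof (intro CollectI conjI allI ballI impI)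
    fix r assume "r \<in> Pstar" thus "(eps *\<^sub>R axis q 1) $ r = 0" using q by (auto simp: axis_def)
  next
    fix r show "0 \<le> (eps *\<^sub>R axis q (1::real)) $ r" using eps_pos by (simp add: axis_def)
  next
    fix a ps b assume c: "marked_max_chain Pstar a ps b"
    have ab: "a < b" "a \<in> Pstar" "b \<in> Pstar" using chain_props(1)[OF c] c
      by (auto simp: marked_max_chain_def)
    have "sum_list (map (\<lambda>p. (eps *\<^sub>R axis q (1::real)) $ p) ps)
        = (\<Sum>p\<in>set ps. (eps *\<^sub>R axis q (1::real)) $ p)"
      using chain_props(2)[OF c] by (simp add: sum_list_distinct_conv_sum_set)
    also have "\<dots> = (\<Sum>p\<in>set ps. if q = p then eps else 0)"
      by (rule sum.cong) (auto simp: axis_def)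
    also have "\<dots> = (if q \<in> set ps then eps else 0)" by (simp add: sum.delta)
    also have "\<dots> \<le> lam b - lam a" using eps_le[OF ab(2,3,1)] strict[OF ab(2,3,1)] by auto
    finally show "sum_list (map (\<lambda>p. (eps *\<^sub>R axis q 1) $ p) ps) \<le> lam b - lam a" .
  qed
  have zeroS: "x $ q = 0" if "x \<in> S" "q \<in> Pstar" for x q
    using that by (simp add: S_def marked_chain_polytope_def)
  have adS: "aff_dim S = int (card (- Pstar))"
  proof (rule aff_dim_coord)
    show "0 \<in> S" by (rule S0)
    show "x $ q = 0" if "x \<in> S" "q \<notin> - Pstar" for x q using zeroS that by simp
    show "\<exists>c. c \<noteq> 0 \<and> c *\<^sub>R axis q 1 \<in> S" if "q \<in> - Pstar" for q
      using axS[of q] eps_pos that by (intro exI[of _ eps]) auto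
  qed
  have facet: "{x \<in> S. x $ p = 0} facet_of S" if p: "p \<notin> Pstar" for p
  proof -
    have eq: "{x \<in> S. x $ p = 0} = S \<inter> {x. (- axis p 1) \<bullet> x = 0}"
      by (auto simp: inner_axis')
    have face: "{x \<in> S. x $ p = 0} face_of S"
      unfolding eq
      by (rule face_of_Int_supporting_hyperplane_le[OF convS]) (simp add: inner_axis' nonneg)
    have adF: "aff_dim {x \<in> S. x $ p = 0} = int (card (- Pstar - {p}))"
    proof (rule aff_dim_coord)
      show "0 \<in> {x \<in> S. x $ p = 0}" using S0 by simp
      show "x $ q = 0" if "x \<in> {x \<in> S. x $ p = 0}" "q \<notin> - Pstar - {p}" for x q
        using zeroS that by auto
      show "\<exists>c. c \<noteq> 0 \<and> c *\<^sub>R axis q 1 \<in> {x \<in> S. x $ p = 0}" if "q \<in> - Pstar - {p}" for q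
        using axS[of q] eps_pos that by (intro exI[of _ eps]) (auto simp: axis_def)
    qed
    have "card (- Pstar - {p}) = card (- Pstar) - 1" using p by simp
    moreover have "card (- Pstar) \<ge> 1" using p
      by (metis Compl_iff card_0_eq empty_iff finite less_one not_less)
    ultimately have "aff_dim {x \<in> S. x $ p = 0} = aff_dim S - 1" using adF adS by simp
    moreover have "{x \<in> S. x $ p = 0} \<noteq> {}" using S0 by auto
    ultimately show ?thesis using face by (simp add: facet_of_def)
  qed
  have ext: "0 extreme_point_of S"
    unfolding extreme_point_of_def
  proof (intro conjI ballI S0)
    fix a b assume a: "a \<in> S" and b: "b \<in> S"
    show "(0::real^'a::{finite,order}) \<notin> open_segment a b"
    proof
      assume "(0::real^'a::{finite,order}) \<in> open_segment a b"
      then obtain u where u: "a \<noteq> b" "0 < u" "u < 1" "0 = (1 - u) *\<^sub>R a + u *\<^sub>R b"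
        by (auto simp: in_segment)
      have "a $ q = 0 \<and> b $ q = 0" for q
      proof -
        have "0 = (1 - u) * a $ q + u * b $ q" using arg_cong[OF u(4), of "\<lambda>x. x $ q"] by simp
        moreover have "0 \<le> (1 - u) * a $ q" "0 \<le> u * b $ q"
          using nonneg[OF a, of q] nonneg[OF b, of q] u by auto
        ultimately have "(1 - u) * a $ q = 0" "u * b $ q = 0" by linarith+
        thus ?thesis using u(2,3) by auto
      qed
      hence "a = b" by (simp add: vec_eq_iff)
      with u(1) show False by simp
    qed
  qed
  show ?thesis using facet ext unfolding S_def by blast
qed

end
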